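(* Let $L$ be a finite-dimensional Lie algebra over an arbitrary field $F$. Let $U$ be a core-free subalgebra of $L$ such that $\langle u,z\rangle$ is either two-dimensional or a $\mu$-algebra for every $0\ne u\in U$ and $z\in L\setminus U$. Then one of the following holds: (i) $L$ is almost abelian; (ii) $\langle u,z\rangle$ is a $\mu$-algebra for every $0\ne u\in U$ and $z\in L\setminus U$; (iii) $F$ has characteristic two and there is an isomorphism $L\cong K$ carrying $U$ onto $Fc$.
   Context: $K$ denotes the three-dimensional Lie algebra with basis $a,b,c$ and products $[a,b]=c$, $[b,c]=b$, $[a,c]=a$. $\langle u,z\rangle$ denotes the subalgebra generated by $u,z$. The core of $U$ is the largest ideal of $L$ contained in $U$; $U$ is core-free if its core is $0$. A $\mu$-algebra is a non-solvable Lie algebra in which every proper subalgebra is one-dimensional. $L$ is almost abelian if $L=L^2\oplus Fx$ for some $x$, where $L^2=[L,L]$ is abelian and $\mathrm{ad}\,x$ acts as the identity map on $L^2$. *)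

theory Defs
  imports Complex_Main
begin

text \<open>A Lie algebra over a field 'f: the whole type 'v is the underlying vector
space (scalar multiplication scale), with Lie bracket br.\<close>

definition lie_algebra :: "('f::field \<Rightarrow> 'v::ab_group_add \<Rightarrow> 'v) \<Rightarrow> ('v \<Rightarrow> 'v \<Rightarrow> 'v) \<Rightarrow> bool" where
  "lie_algebra scale br \<longleftrightarrow>
     vector_space scale \<and>
     (\<forall>x y z. br (x + y) z = br x z + br y z) \<and>
     (\<forall>x y z. br x (y + z) = br x y + br x z) \<and>
     (\<forall>k x y. br (scale k x) y = scale k (br x y)) \<and>
     (\<forall>k x y. br x (scale k y) = scale k (br x y)) \<and>
     (\<forall>x. br x x = 0) \<and>
     (\<forall>x y z. br x (br y z) + br y (br z x) + br z (br x y) = 0)"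

definition fin_dim :: "('f::field \<Rightarrow> 'v::ab_group_add \<Rightarrow> 'v) \<Rightarrow> bool" where
  "fin_dim scale \<longleftrightarrow> (\<exists>B. finite B \<and> module.span scale B = UNIV)"

definition lie_subalgebra :: "('f::field \<Rightarrow> 'v::ab_group_add \<Rightarrow> 'v) \<Rightarrow> ('v \<Rightarrow> 'v \<Rightarrow> 'v) \<Rightarrow> 'v set \<Rightarrow> bool" where
  "lie_subalgebra scale br S \<longleftrightarrow>
     module.subspace scale S \<and> (\<forall>x\<in>S. \<forall>y\<in>S. br x y \<in> S)"

definition lie_ideal :: "('f::field \<Rightarrow> 'v::ab_group_add \<Rightarrow> 'v) \<Rightarrow> ('v \<Rightarrow> 'v \<Rightarrow> 'v) \<Rightarrow> 'v set \<Rightarrow> bool" where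
  "lie_ideal scale br I \<longleftrightarrow>
     module.subspace scale I \<and> (\<forall>x. \<forall>y\<in>I. br x y \<in> I)"

definition core :: "('f::field \<Rightarrow> 'v::ab_group_add \<Rightarrow> 'v) \<Rightarrow> ('v \<Rightarrow> 'v \<Rightarrow> 'v) \<Rightarrow> 'v set \<Rightarrow> 'v set" where
  "core scale br U = module.span scale (\<Union>{I. lie_ideal scale br I \<and> I \<subseteq> U})"

definition core_free :: "('f::field \<Rightarrow> 'v::ab_group_add \<Rightarrow> 'v) \<Rightarrow> ('v \<Rightarrow> 'v \<Rightarrow> 'v) \<Rightarrow> 'v set \<Rightarrow> bool" where
  "core_free scale br U \<longleftrightarrow> core scale br U = {0}"

definition gen_subalg :: "('f::field \<Rightarrow> 'v::ab_group_add \<Rightarrow> 'v) \<Rightarrow> ('v \<Rightarrow> 'v \<Rightarrow> 'v) \<Rightarrow> 'v set \<Rightarrow> 'v set" where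
  "gen_subalg scale br X = \<Inter>{S. lie_subalgebra scale br S \<and> X \<subseteq> S}"

definition bracket_set :: "('f::field \<Rightarrow> 'v::ab_group_add \<Rightarrow> 'v) \<Rightarrow> ('v \<Rightarrow> 'v \<Rightarrow> 'v) \<Rightarrow> 'v set \<Rightarrow> 'v set \<Rightarrow> 'v set" where
  "bracket_set scale br A B = module.span scale {br x y | x y. x \<in> A \<and> y \<in> B}"

fun derived_series :: "('f::field \<Rightarrow> 'v::ab_group_add \<Rightarrow> 'v) \<Rightarrow> ('v \<Rightarrow> 'v \<Rightarrow> 'v) \<Rightarrow> 'v set \<Rightarrow> nat \<Rightarrow> 'v set" where
  "derived_series scale br S 0 = S"
| "derived_series scale br S (Suc n) =
     bracket_set scale br (derived_series scale br S n) (derived_series scale br S n)"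

definition solvable :: "('f::field \<Rightarrow> 'v::ab_group_add \<Rightarrow> 'v) \<Rightarrow> ('v \<Rightarrow> 'v \<Rightarrow> 'v) \<Rightarrow> 'v set \<Rightarrow> bool" where
  "solvable scale br S \<longleftrightarrow> (\<exists>n. derived_series scale br S n = {0})"

definition mu_algebra :: "('f::field \<Rightarrow> 'v::ab_group_add \<Rightarrow> 'v) \<Rightarrow> ('v \<Rightarrow> 'v \<Rightarrow> 'v) \<Rightarrow> 'v set \<Rightarrow> bool" where
  "mu_algebra scale br S \<longleftrightarrow>
     \<not> solvable scale br S \<and>
     (\<forall>T. lie_subalgebra scale br T \<and> T \<subseteq> S \<and> T \<noteq> S \<and> T \<noteq> {0}
          \<longrightarrow> vector_space.dim scale T = 1)"

definition almost_abelian :: "('f::field \<Rightarrow> 'v::ab_group_add \<Rightarrow> 'v) \<Rightarrow> ('v \<Rightarrow> 'v \<Rightarrow> 'v) \<Rightarrow> bool" where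
  "almost_abelian scale br \<longleftrightarrow>
     (let L2 = bracket_set scale br UNIV UNIV in
      \<exists>x. L2 \<inter> module.span scale {x} = {0} \<and>
          module.span scale (L2 \<union> {x}) = UNIV \<and>
          (\<forall>a\<in>L2. \<forall>b\<in>L2. br a b = 0) \<and>
          (\<forall>a\<in>L2. br x a = a))"

text \<open>L is isomorphic to K = span{a,b,c}, [a,b]=c, [b,c]=b, [a,c]=a, via an
isomorphism carrying U onto Fc: equivalently L has a basis a,b,c with these
products and U = Fc.\<close>
definition iso_K_with :: "('f::field \<Rightarrow> 'v::ab_group_add \<Rightarrow> 'v) \<Rightarrow> ('v \<Rightarrow> 'v \<Rightarrow> 'v) \<Rightarrow> 'v set \<Rightarrow> bool" where
  "iso_K_with scale br U \<longleftrightarrow>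
     (\<exists>a b c. a \<noteq> b \<and> a \<noteq> c \<and> b \<noteq> c \<and>
        \<not> module.dependent scale {a, b, c} \<and>
        module.span scale {a, b, c} = UNIV \<and>
        br a b = c \<and> br b c = b \<and> br a c = a \<and>
        U = module.span scale {c})"

end

theory Submission
  imports Defs
begin

locale lie = vector_space scale for scale :: "'f::field \<Rightarrow> 'v::ab_group_add \<Rightarrow> 'v" (infixr "*s" 75) +
  fixes br :: "'v \<Rightarrow> 'v \<Rightarrow> 'v"
  assumes ladd: "br (x + y) z = br x z + br y z"
    and radd: "br x (y + z) = br x y + br x z"
    and lsc: "br (k *s x) y = k *s (br x y)"
    and rsc: "br x (k *s y) = k *s (br x y)"
    and alt: "br x x = 0"
    and jac: "br x (br y z) + br y (br z x) + br z (br x y) = 0"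
begin

lemma br0l[simp]: "br 0 x = 0" using ladd[of 0 0 x] by simp
lemma br0r[simp]: "br x 0 = 0" using radd[of x 0 0] by simp
lemma anti: "br x y = - br y x"
proof -
  have "br x x + br y x + (br x y + br y y) = 0" using alt[of "x+y"] by (simp only: ladd radd)
  then have "br x y + br y x = 0" by (simp add: alt add.commute)
  then show ?thesis by (simp add: eq_neg_iff_add_eq_0)
qed
lemma brminl[simp]: "br (-x) y = - br x y" using ladd[of x "-x" y] by (simp add: eq_neg_iff_add_eq_0 add.commute)
lemma brminr[simp]: "br x (-y) = - br x y" using radd[of x y "-y"] by (simp add: eq_neg_iff_add_eq_0 add.commute)
lemma brdiffl: "br (x - y) z = br x z - br y z" using ladd[of x "-y" z] by simp
lemma brdiffr: "br x (y - z) = br x y - br x z" using radd[of x y "-z"] by simp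

lemma span2: "x \<in> span {a, b} \<longleftrightarrow> (\<exists>p q. x = p *s a + q *s b)"
proof
  assume "x \<in> span {a, b}"
  then obtain p where "x - p *s a \<in> span {b}" by (auto simp: span_breakdown_eq)
  then obtain q where "x - p *s a = q *s b" by (auto simp: span_singleton)
  then have "x = p *s a + q *s b" by (simp add: algebra_simps)
  then show "\<exists>p q. x = p *s a + q *s b" by blast
next
  assume "\<exists>p q. x = p *s a + q *s b"
  then obtain p q where "x = p *s a + q *s b" by blast
  then show "x \<in> span {a,b}"
    by (simp add: span_add span_scale span_base)
qed

lemma br_span2: "x \<in> span {a,b} \<Longrightarrow> y \<in> span {a,b} \<Longrightarrow> br x y \<in> span {br a b}"
proof -
  assume "x \<in> span {a,b}" "y \<in> span {a,b}"
  then obtain p q r t where x: "x = p *s a + q *s b" and y: "y = r *s a + t *s b" by (auto simp: span2)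
  have "br x y = (p*t - q*r) *s br a b"
    by (simp add: x y ladd radd lsc rsc alt anti[of b a] algebra_simps)
  then show ?thesis by (simp add: span_scale span_base)
qed

lemma scale_solve: "c \<noteq> 0 \<Longrightarrow> c *s v = w \<Longrightarrow> v = inverse c *s w"
proof -
  assume c: "c \<noteq> 0" and w: "c *s v = w"
  show ?thesis unfolding w[symmetric] using c by simp
qed

lemma subalg_span2: "br a b \<in> span {a,b} \<Longrightarrow> lie_subalgebra scale br (span {a,b})"
proof -
  assume h: "br a b \<in> span {a,b}"
  have "span {br a b} \<subseteq> span {a,b}" using h by (simp add: span_minimal)
  then show ?thesis unfolding lie_subalgebra_def using br_span2 by blast
qed

lemma solv2: "S \<subseteq> span {a,b} \<Longrightarrow> solvable scale br S"
proof -
  assume S: "S \<subseteq> span {a,b}"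
  have d1: "derived_series scale br S 1 \<subseteq> span {br a b}"
    unfolding bracket_set_def One_nat_def derived_series.simps
    by (rule span_minimal) (use S br_span2[of _ a b] in blast)+
  have "{br x y |x y. x \<in> derived_series scale br S 1 \<and> y \<in> derived_series scale br S 1} \<subseteq> {0}"
  proof clarify
    fix x y assume "x \<in> derived_series scale br S 1" "y \<in> derived_series scale br S 1"
    with d1 have "x \<in> range (\<lambda>k. k *s br a b)" "y \<in> range (\<lambda>k. k *s br a b)"
      by (auto simp: span_singleton)
    then obtain k m where "x = k *s br a b" "y = m *s br a b" by blast
    then show "br x y = 0" by (simp add: lsc rsc alt)
  qed
  then have "derived_series scale br S 2 \<subseteq> {0}"
    using span_mono[of _ "{0}"] by (simp add: numeral_2_eq_2 bracket_set_def)
  then have "derived_series scale br S 2 = {0}"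
    by (auto simp: numeral_2_eq_2 bracket_set_def span_zero)
  then show ?thesis unfolding solvable_def by blast
qed

lemma gen_sub: "lie_subalgebra scale br (gen_subalg scale br X)"
  unfolding gen_subalg_def lie_subalgebra_def
  by (auto intro!: subspace_Inter)

lemma gen_ge: "X \<subseteq> gen_subalg scale br X"
  unfolding gen_subalg_def by auto

lemma gen_min: "lie_subalgebra scale br S \<Longrightarrow> X \<subseteq> S \<Longrightarrow> gen_subalg scale br X \<subseteq> S"
  unfolding gen_subalg_def by auto

lemma indep_dim_span:
  assumes "independent B" "finite B" "B \<subseteq> S" "card B = dim S" "card B > 0"
  shows "S \<subseteq> span B"
proof
  fix x assume x: "x \<in> S"
  obtain B' where B': "B' \<subseteq> S" "independent B'" "S \<subseteq> span B'" "card B' = dim S"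
    using basis_exists by blast
  have fB': "finite B'" using B'(4) assms(4,5) card.infinite by fastforce
  show "x \<in> span B"
  proof (rule ccontr)
    assume xn: "x \<notin> span B"
    then have xB: "x \<notin> B" using span_base by blast
    have "independent (insert x B)" using xn assms(1) by (rule independent_insertI)
    moreover have "insert x B \<subseteq> span B'" using x assms(3) B'(3) by auto
    ultimately have "card (insert x B) \<le> card B'" using independent_span_bound fB' by blast
    then show False using xB assms B'(4) by simp
  qed
qed

lemma indep2: "u \<noteq> 0 \<Longrightarrow> w \<notin> span {u} \<Longrightarrow> independent {u, w}"
proof -
  assume "u \<noteq> 0" "w \<notin> span {u}"
  then have "independent (insert w {u})"
    by (intro independent_insertI) (auto simp: independent_insert independent_empty)
  then show ?thesis by (simp add: insert_commute)
qed

lemma card2: "w \<notin> span {u} \<Longrightarrow> card {u, w} = 2"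
proof -
  assume "w \<notin> span {u}"
  then have "w \<noteq> u" using span_base[of u "{u}"] by auto
  then show ?thesis by simp
qed

lemma dim2_span:
  assumes "dim S = 2" "u \<in> S" "w \<in> S" "u \<noteq> 0" "w \<notin> span {u}"
  shows "S \<subseteq> span {u, w}"
  using indep_dim_span[of "{u,w}" S] indep2 card2 assms by auto

lemma dim1_span:
  assumes "dim S = 1" "u \<in> S" "u \<noteq> 0"
  shows "S \<subseteq> span {u}"
  using indep_dim_span[of "{u}" S] assms by (auto simp: independent_insert independent_empty)

lemma mu_contra:
  assumes mu: "mu_algebra scale br S" and S: "lie_subalgebra scale br S"
    and u: "u \<in> S" "u \<noteq> 0" and w: "w \<in> S" "w \<notin> span {u}"
    and b: "br u w \<in> span {u,w}"
  shows False
proof -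
  have P: "lie_subalgebra scale br (span {u,w})" using b by (rule subalg_span2)
  have PS: "span {u,w} \<subseteq> S" using S u w unfolding lie_subalgebra_def by (intro span_minimal) auto
  show False
  proof (cases "span {u,w} = S")
    case True
    then show False using solv2[of S u w] mu unfolding mu_algebra_def by auto
  next
    case False
    have "span {u,w} \<noteq> {0}" using u span_base[of u "{u,w}"] by auto
    then have "dim (span {u,w}) = 1" using mu P PS False unfolding mu_algebra_def by blast
    moreover have "dim (span {u,w}) = 2"
      using dim_span_eq_card_independent[OF indep2[OF u(2) w(2)]] card2[OF w(2)] by simp
    ultimately show False by simp
  qed
qed

end

locale lieU = lie scale br for scale :: "'f::field \<Rightarrow> 'v::ab_group_add \<Rightarrow> 'v" (infixr "*s" 75) and br +
  fixes U :: "'v set"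
  assumes Usub: "lie_subalgebra scale br U"
    and hyp: "\<forall>u\<in>U. \<forall>z. u \<noteq> 0 \<and> z \<notin> U \<longrightarrow>
           vector_space.dim scale (gen_subalg scale br {u, z}) = 2 \<or>
           mu_algebra scale br (gen_subalg scale br {u, z})"
begin

lemma Usp: "subspace U" using Usub unfolding lie_subalgebra_def by simp
lemma Ubr: "x \<in> U \<Longrightarrow> y \<in> U \<Longrightarrow> br x y \<in> U" using Usub unfolding lie_subalgebra_def by simp

lemma notspan: "u \<in> U \<Longrightarrow> z \<notin> U \<Longrightarrow> z \<notin> span {u}"
  using span_minimal[of "{u}" U] Usp by auto

lemma sub_br: "lie_subalgebra scale br S \<Longrightarrow> x \<in> S \<Longrightarrow> y \<in> S \<Longrightarrow> br x y \<in> S"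
  unfolding lie_subalgebra_def by simp
lemma sub_sp: "lie_subalgebra scale br S \<Longrightarrow> subspace S"
  unfolding lie_subalgebra_def by simp

lemma dim2_br:
  assumes "u \<in> U" "u \<noteq> 0" "z \<notin> U" "dim (gen_subalg scale br {u, z}) = 2"
  shows "br u z \<in> span {u, z}"
proof -
  let ?S = "gen_subalg scale br {u, z}"
  have "u \<in> ?S" "z \<in> ?S" using gen_ge[of "{u,z}"] by auto
  then have "?S \<subseteq> span {u,z}" using dim2_span assms notspan by blast
  moreover have "br u z \<in> ?S" using sub_br[OF gen_sub] \<open>u \<in> ?S\<close> \<open>z \<in> ?S\<close> by blast
  ultimately show ?thesis by blast
qed

lemma stepB_core:
  assumes u: "u \<in> U" "u \<noteq> 0" and v: "v \<notin> U" "br u v = lam *s v + al *s u"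
    and S: "mu_algebra scale br S" "lie_subalgebra scale br S" "u \<in> S"
    and z: "z \<in> S" "z \<notin> U" "z + v \<notin> U"
  shows False
proof -
  let ?S' = "gen_subalg scale br {u, z+v}"
  have S'sub: "lie_subalgebra scale br ?S'" by (rule gen_sub)
  have uS': "u \<in> ?S'" and zvS': "z + v \<in> ?S'" using gen_ge[of "{u,z+v}"] by auto
  have zsp: "z \<notin> span {u}" "z + v \<notin> span {u}" "v \<notin> span {u}"
    using notspan u z v by auto
  have brv: "br u v \<in> span {u, v}" using v(2) span2[of "br u v" u v] by (auto simp: add.commute)
  from hyp u z have "dim ?S' = 2 \<or> mu_algebra scale br ?S'" by auto
  then show False
  proof
    assume d2: "dim ?S' = 2"
    have "br u (z+v) \<in> span {u, z+v}" using dim2_br[OF u z(3) d2] .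
    then obtain p q where pq: "br u (z+v) = p *s u + q *s (z+v)" by (auto simp: span2)
    have bz: "br u z = (p - al) *s u + q *s z + (q - lam) *s v"
      using pq v(2) by (simp add: radd algebra_simps)
    show False
    proof (cases "q = lam")
      case True
      then have "br u z \<in> span {u, z}" using bz span2 by auto
      then show False using mu_contra[OF S(1,2,3) u(2) z(1) zsp(1)] by blast
    next
      case False
      have "(q - lam) *s v = br u z - (p - al) *s u - q *s z" using bz by (simp add: algebra_simps)
      then have "v = inverse (q - lam) *s (br u z - (p - al) *s u - q *s z)"
        using False by (intro scale_solve) auto
      moreover have "br u z - (p - al) *s u - q *s z \<in> S"
        using S z sub_br[OF S(2)] sub_sp[OF S(2)]
        by (intro subspace_diff subspace_scale) auto
      ultimately have "v \<in> S" using sub_sp[OF S(2)] subspace_scale by metis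
      then show False using mu_contra[OF S(1,2,3) u(2) _ zsp(3) brv] by blast
    qed
  next
    assume mu': "mu_algebra scale br ?S'"
    let ?t = "br u z - lam *s z + al *s u"
    have tS: "?t \<in> S"
      using S z sub_br[OF S(2)] sub_sp[OF S(2)]
      by (intro subspace_diff subspace_scale subspace_add) auto
    have teq: "?t = br u (z+v) - lam *s (z+v)" using v(2) by (simp add: radd algebra_simps)
    have tS': "?t \<in> ?S'" unfolding teq
      using uS' zvS' sub_br[OF S'sub] sub_sp[OF S'sub]
      by (intro subspace_diff subspace_scale) auto
    let ?Y = "S \<inter> ?S'"
    have Ysub: "lie_subalgebra scale br ?Y" using S(2) S'sub
      unfolding lie_subalgebra_def by (auto intro: subspace_inter)
    show False
    proof (cases "?Y = S")
      case True
      then have "z \<in> ?S'" using z by blast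
      then have "v \<in> ?S'" using zvS' sub_sp[OF S'sub] subspace_diff by fastforce
      then show False using mu_contra[OF mu' S'sub uS' u(2) _ zsp(3) brv] by blast
    next
      case False
      have "?Y \<noteq> {0}" using u S uS' by auto
      then have "dim ?Y = 1" using S(1) Ysub False unfolding mu_algebra_def by blast
      then have "?Y \<subseteq> span {u}" using dim1_span u S uS' by blast
      then obtain c where "?t = c *s u" using tS tS' by (auto simp: span_singleton)
      then have "br u (z+v) = lam *s (z+v) + c *s u" using teq by (simp add: algebra_simps)
      then have "br u (z+v) \<in> span {u, z+v}" using span2 by (auto simp: add.commute)
      then show False using mu_contra[OF mu' S'sub uS' u(2) zvS' zsp(2)] by blast
    qed
  qed
qed


lemma stepB:
  assumes u: "u \<in> U" "u \<noteq> 0" and v: "v \<notin> U" "br u v = lam *s v + al *s u"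
    and z: "z \<notin> U"
  shows "br u z \<in> span {u, z}"
proof -
  let ?S = "gen_subalg scale br {u, z}"
  have Ssub: "lie_subalgebra scale br ?S" by (rule gen_sub)
  have uS: "u \<in> ?S" and zS: "z \<in> ?S" using gen_ge[of "{u,z}"] by auto
  from hyp u z have "dim ?S = 2 \<or> mu_algebra scale br ?S" by auto
  then show ?thesis
  proof
    assume "dim ?S = 2" then show ?thesis using dim2_br u z by blast
  next
    assume mu: "mu_algebra scale br ?S"
    show ?thesis
    proof (cases "z + v \<in> U")
      case False
      then show ?thesis using stepB_core[OF u v mu Ssub uS zS z] by blast
    next
      case zv: True
      show ?thesis
      proof (cases "\<exists>z'\<in>?S. \<forall>c. z' - c *s z \<notin> U")
        case True
        then obtain z' where z': "z' \<in> ?S" "\<forall>c. z' - c *s z \<notin> U" by blast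
        have z'U: "z' \<notin> U" using z'(2)[rule_format, of 0] by simp
        have "z' + v \<notin> U"
        proof
          assume "z' + v \<in> U"
          then have "(z' + v) - (z + v) \<in> U" using zv Usp subspace_diff by blast
          then show False using z'(2)[rule_format, of 1] by simp
        qed
        then show ?thesis using stepB_core[OF u v mu Ssub uS z' (1) z'U] by blast
      next
        case False
        have "br u z \<in> ?S" using sub_br[OF Ssub uS zS] .
        with False obtain c where c: "br u z - c *s z \<in> U" by blast
        have cS: "br u z - c *s z \<in> ?S"
          using sub_br[OF Ssub uS zS] zS sub_sp[OF Ssub] by (intro subspace_diff subspace_scale) auto
        let ?Y = "?S \<inter> U"
        have Ysub: "lie_subalgebra scale br ?Y" using Ssub Usub
          unfolding lie_subalgebra_def by (auto intro: subspace_inter)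
        have "?Y \<noteq> ?S" using zS z by blast
        moreover have "?Y \<noteq> {0}" using u uS by auto
        ultimately have "dim ?Y = 1" using mu Ysub unfolding mu_algebra_def by blast
        then have "?Y \<subseteq> span {u}" using dim1_span u uS by blast
        then obtain d where "br u z - c *s z = d *s u" using c cS by (auto simp: span_singleton)
        then have "br u z = d *s u + c *s z" by (simp add: algebra_simps)
        then show ?thesis using span2 by blast
      qed
    qed
  qed
qed

lemma lin3:
  assumes "p *s u + q *s z0 + r *s z = 0" "r \<noteq> 0"
  shows "z \<in> span {u, z0}"
proof -
  have "r *s z = - (p *s u + q *s z0)" using assms(1)
    by (metis add.commute eq_neg_iff_add_eq_0)
  then have "z = inverse r *s (- (p *s u + q *s z0))" using assms(2) by (intro scale_solve) auto
  moreover have "p *s u + q *s z0 \<in> span {u, z0}" using span2 by blast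
  ultimately show ?thesis using span_scale span_neg by metis
qed

lemma stepC:
  assumes u: "u \<in> U" "u \<noteq> 0" and v: "z0 \<notin> U" "br u z0 = lam *s z0 + al *s u"
    and P: "\<And>z. z \<notin> U \<Longrightarrow> br u z \<in> span {u, z}"
  shows "\<exists>c. br u x = lam *s x + c *s u"
proof -
  have good: "\<exists>c. br u z = lam *s z + c *s u" if z: "z \<notin> U" for z
  proof -
    obtain b a where ab: "br u z = b *s u + a *s z" using P[OF z] by (auto simp: span2)
    show ?thesis
    proof (cases "z \<in> span {u, z0}")
      case True
      then obtain p q where z: "z = p *s u + q *s z0" by (auto simp: span2)
      have "br u z = q *s br u z0" by (simp add: z radd rsc alt)
      also have "\<dots> = lam *s z + (q * al - lam * p) *s u" using v(2) z by (simp add: algebra_simps)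
      finally show ?thesis by blast
    next
      case zn: False
      have "a = lam"
      proof (cases "z0 + z \<in> U")
        case False
        obtain b' a' where ab': "br u (z0 + z) = b' *s u + a' *s (z0 + z)"
          using P[OF False] by (auto simp: span2)
        have eq: "(b' - al - b) *s u + (a' - lam) *s z0 + (a' - a) *s z = 0"
          using ab ab' v(2) by (simp add: radd algebra_simps)
        have "a' = a" using lin3[OF eq] zn by auto
        then have eq2: "(b' - al - b) *s u + (a' - lam) *s z0 = 0" using eq by simp
        have "a' = lam"
        proof (rule ccontr)
          assume "a' \<noteq> lam"
          then have "z0 = inverse (a' - lam) *s (- ((b' - al - b) *s u))" using eq2
            by (intro scale_solve) (auto simp: eq_neg_iff_add_eq_0 add.commute)
          moreover have "- ((b' - al - b) *s u) \<in> span {u}" by (intro span_neg span_scale span_base) simp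
          ultimately have "z0 \<in> span {u}" using span_scale by metis
          then show False using notspan u v by blast
        qed
        then show ?thesis using \<open>a' = a\<close> by simp
      next
        case True
        have "br u (z0 + z) \<in> U" using Ubr u True by blast
        moreover have "br u (z0 + z) = lam *s (z0 + z) + (al + b) *s u + (a - lam) *s z"
          using ab v(2) by (simp add: radd algebra_simps)
        then have "(a - lam) *s z = br u (z0 + z) - lam *s (z0 + z) - (al + b) *s u"
          by (simp add: algebra_simps)
        ultimately have "(a - lam) *s z \<in> U"
          using True u Usp by (simp add: subspace_diff subspace_scale)
        then show ?thesis
        proof (rule contrapos_pp)
          assume "a \<noteq> lam"
          then have "z = inverse (a - lam) *s ((a - lam) *s z)" by simp
          then show "(a - lam) *s z \<notin> U" using z Usp subspace_scale[of U "(a - lam) *s z" "inverse (a - lam)"] by auto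
        qed
      qed
      then show ?thesis using ab by (auto simp: add.commute)
    qed
  qed
  show ?thesis
  proof (cases "x \<in> U")
    case False then show ?thesis using good by blast
  next
    case True
    have "x + z0 \<notin> U"
    proof
      assume "x + z0 \<in> U"
      then have "(x + z0) - x \<in> U" using True Usp subspace_diff by blast
      then show False using v by simp
    qed
    then obtain c where c: "br u (x + z0) = lam *s (x + z0) + c *s u" using good by blast
    have "br u x = br u (x + z0) - br u z0" by (simp add: radd)
    also have "\<dots> = lam *s x + (c - al) *s u" using c v(2) by (simp add: algebra_simps)
    finally show ?thesis by blast
  qed
qed

end

locale lieUc = lieU scale br U for scale :: "'f::field \<Rightarrow> 'v::ab_group_add \<Rightarrow> 'v" (infixr "*s" 75) and br U +
  assumes cf: "core_free scale br U"
begin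

lemma ideal_zero: "lie_ideal scale br I \<Longrightarrow> I \<subseteq> U \<Longrightarrow> I \<subseteq> {0}"
proof -
  assume "lie_ideal scale br I" "I \<subseteq> U"
  then have "I \<in> {I. lie_ideal scale br I \<and> I \<subseteq> U}" by simp
  then have "I \<subseteq> \<Union>{I. lie_ideal scale br I \<and> I \<subseteq> U}" by (rule Union_upper)
  then have "I \<subseteq> core scale br U" unfolding core_def using span_superset by (rule order_trans)
  then show ?thesis using cf unfolding core_free_def by simp
qed

lemma lam_ne0:
  assumes u: "u \<in> U" "u \<noteq> 0" and ad: "\<And>x. \<exists>c. br u x = lam *s x + c *s u"
  shows "lam \<noteq> 0"
proof
  assume l0: "lam = 0"
  have "lie_ideal scale br (span {u})"
    unfolding lie_ideal_def
  proof (intro conjI allI ballI)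
    fix x y assume "y \<in> span {u}"
    then obtain k where y: "y = k *s u" by (auto simp: span_singleton)
    obtain c where c: "br u x = lam *s x + c *s u" using ad by blast
    have "br x y = (- (k * c)) *s u" using c l0 by (simp add: y rsc anti[of x u])
    then show "br x y \<in> span {u}" by (simp add: span_neg span_scale span_base)
  qed simp
  moreover have "span {u} \<subseteq> U" using u Usp by (simp add: span_minimal)
  ultimately have "span {u} \<subseteq> {0}" by (rule ideal_zero)
  then show False using u span_base[of u "{u}"] by auto
qed

end

locale fin = lieUc scale br U for scale :: "'f::field \<Rightarrow> 'v::ab_group_add \<Rightarrow> 'v" (infixr "*s" 75) and br U +
  fixes u lam
  assumes uU: "u \<in> U" and u0: "u \<noteq> 0" and lam0: "lam \<noteq> 0"
    and ad: "\<exists>c. br u x = lam *s x + c *s u"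
begin

definition W where "W = {w. br u w = lam *s w}"

lemma Wsp: "subspace W"
  unfolding W_def subspace_def
proof (intro conjI ballI allI)
  fix x y assume "x \<in> {w. br u w = lam *s w}" "y \<in> {w. br u w = lam *s w}"
  then show "x + y \<in> {w. br u w = lam *s w}" by (simp add: radd scale_right_distrib)
next
  fix c x assume "x \<in> {w. br u w = lam *s w}"
  then show "c *s x \<in> {w. br u w = lam *s w}" by (simp add: rsc mult.commute)
qed simp

lemma decomp: "\<exists>c w. w \<in> W \<and> x = c *s u + w"
proof -
  obtain c where c: "br u x = lam *s x + c *s u" using ad by blast
  let ?w = "x + (c / lam) *s u"
  have e: "lam * (c / lam) = c" using lam0 by simp
  have "br u ?w = lam *s x + c *s u" using c lam0 by (simp add: radd rsc alt)
  also have "\<dots> = lam *s ?w" by (simp add: scale_right_distrib lam0)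
  finally have "br u ?w = lam *s ?w" .
  then have "?w \<in> W" by (simp add: W_def)
  moreover have "x = (- (c / lam)) *s u + ?w" by simp
  ultimately show ?thesis by blast
qed

lemma uW: "c *s u \<in> W \<Longrightarrow> c = 0"
  using lam0 u0 by (simp add: W_def rsc alt)

lemma WW: assumes "w1 \<in> W" "w2 \<in> W"
  shows "\<exists>d. br w1 w2 = d *s u \<and> (2::'f) * d = 0"
proof -
  have w1: "br u w1 = lam *s w1" and w2: "br u w2 = lam *s w2" using assms by (auto simp: W_def)
  let ?b = "br w1 w2"
  have j: "br u ?b + br w1 (br w2 u) + br w2 (br u w1) = 0" by (rule jac)
  have "br w2 u = - (lam *s w2)" using w2 anti[of w2 u] by (simp only:)
  then have X: "br w1 (br w2 u) = - (lam *s ?b)" by (simp only: brminr rsc)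
  have "br w2 w1 = - ?b" by (rule anti)
  then have Y: "br w2 (br u w1) = - (lam *s ?b)" using w1 by (simp only: rsc scale_minus_right)
  have "br u ?b = - (br w1 (br w2 u) + br w2 (br u w1))" using j
    by (subst eq_neg_iff_add_eq_0) (simp only: add.assoc)
  also have "\<dots> = lam *s ?b + lam *s ?b" unfolding X Y by (simp only: minus_add_distrib minus_minus)
  also have "\<dots> = (2 * lam) *s ?b" by (simp only: mult_2 scale_left_distrib)
  finally have bu: "br u ?b = (2 * lam) *s ?b" .
  obtain c where c: "br u ?b = lam *s ?b + c *s u" using ad by blast
  have "lam *s ?b + lam *s ?b = lam *s ?b + c *s u"
    using bu c by (simp only: mult_2 scale_left_distrib)
  then have "lam *s ?b = c *s u" by (rule add_left_imp_eq)
  then have bd: "?b = inverse lam *s (c *s u)" using lam0 by (intro scale_solve) auto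
  let ?d = "inverse lam * c"
  have bd': "?b = ?d *s u" using bd by simp
  have "br u ?b = 0" unfolding bd' by (simp add: rsc alt)
  then have "(2 * lam) *s ?b = 0" using bu by simp
  then have "2 * lam = 0 \<or> ?b = 0" by simp
  then have "(2::'f) * ?d = 0"
  proof
    assume "2 * lam = 0" then show ?thesis using lam0 by simp
  next
    assume "?b = 0" then have "?d = 0" using bd' u0 by simp
    then show ?thesis by simp
  qed
  then show ?thesis using bd' by blast
qed

lemma abelian_case:
  assumes ab: "\<forall>w1\<in>W. \<forall>w2\<in>W. br w1 w2 = 0"
  shows "almost_abelian scale br"
proof -
  have brW: "br a b \<in> W" for a b
  proof -
    obtain c1 w1 where 1: "w1 \<in> W" "a = c1 *s u + w1" using decomp by blast
    obtain c2 w2 where 2: "w2 \<in> W" "b = c2 *s u + w2" using decomp by blast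
    have w1u: "br w1 u = - (lam *s w1)" using 1 anti[of w1 u] by (simp add: W_def)
    have w2u: "br u w2 = lam *s w2" using 2 by (simp add: W_def)
    have w12: "br w1 w2 = 0" using 1 2 ab by blast
    have "br a b = c1 *s (lam *s w2) + c2 *s (- (lam *s w1))"
      unfolding 1(2) 2(2) by (simp only: ladd radd lsc rsc alt w1u w2u w12 scale_zero_right add_0_left add_0_right) (rule add.commute)
    moreover have "c1 *s (lam *s w2) + c2 *s (- (lam *s w1)) \<in> W"
      using 1 2 Wsp by (intro subspace_add subspace_neg subspace_scale) auto
    ultimately show ?thesis by (simp only:)
  qed
  have L2: "bracket_set scale br UNIV UNIV = W"
  proof
    show "bracket_set scale br UNIV UNIV \<subseteq> W"
      unfolding bracket_set_def by (rule span_minimal) (use brW Wsp in auto)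
    show "W \<subseteq> bracket_set scale br UNIV UNIV"
    proof
      fix w assume w: "w \<in> W"
      have "br u (inverse lam *s w) = w" using w lam0 by (simp add: rsc W_def)
      then show "w \<in> bracket_set scale br UNIV UNIV"
        unfolding bracket_set_def by (metis (mono_tags, lifting) UNIV_I mem_Collect_eq span_base)
    qed
  qed
  let ?x = "inverse lam *s u"
  have i1: "W \<inter> span {?x} = {0}"
  proof -
    have "y = 0" if "y \<in> W" "y \<in> span {?x}" for y
    proof -
      have "y \<in> range (\<lambda>k. k *s ?x)" using that by (simp add: span_singleton)
      then obtain k where "y = k *s ?x" by blast
      then have y: "y = (k * inverse lam) *s u" by simp
      then have "k * inverse lam = 0" using uW that by blast
      then show ?thesis using y by simp
    qed
    moreover have "0 \<in> W" using Wsp subspace_0 by blast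
    ultimately show ?thesis using span_zero by blast
  qed
  have i2: "span (W \<union> {?x}) = UNIV"
  proof -
    have "v \<in> span (W \<union> {?x})" for v
    proof -
      obtain c w where cw: "w \<in> W" "v = c *s u + w" using decomp by blast
      have "v = (c * lam) *s ?x + w" using cw lam0 by simp
      moreover have h1: "?x \<in> span (W \<union> {?x})" and h2: "w \<in> span (W \<union> {?x})" using cw by (auto intro: span_base)
      ultimately show ?thesis using span_add[OF span_scale[OF h1, of "c * lam"] h2] by simp
    qed
    then show ?thesis by blast
  qed
  have i3: "\<forall>a\<in>W. br ?x a = a" using lam0 by (simp add: lsc W_def)
  show ?thesis unfolding almost_abelian_def Let_def L2
    by (rule exI[of _ ?x]) (intro conjI i1 i2 i3 ab)
qed

lemma uW': "u \<notin> W" using uW[of 1] by auto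

lemma scW: "w \<in> W \<Longrightarrow> k *s w \<in> W" using Wsp subspace_scale by blast

lemma nonab_case:
  assumes w1: "w1 \<in> W" and w2: "w2 \<in> W" and nz: "br w1 w2 \<noteq> 0"
  shows "(2::'f) = 0 \<and> iso_K_with scale br U"
proof -
  obtain d where d: "br w1 w2 = d *s u" "(2::'f) * d = 0" using WW[OF w1 w2] by blast
  have d0: "d \<noteq> 0" using d nz by auto
  have two: "(2::'f) = 0" using d(2) d0 mult_eq_0_iff by blast
  have negx: "- x = x" for x :: 'v
  proof -
    have "(1 + 1 :: 'f) *s x = x + x" by (simp only: scale_left_distrib scale_one)
    then have "x + x = (2::'f) *s x" by (simp only: one_add_one)
    then have "x + x = 0" using two by (simp only: scale_zero_left)
    then show ?thesis by (simp add: minus_unique)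
  qed
  define e where "e = inverse d *s w2"
  have eW: "e \<in> W" unfolding e_def using w2 by (rule scW)
  have w1e: "br w1 e = u" unfolding e_def using d d0 by (simp add: rsc)
  have w1u: "br w1 u = - (lam *s w1)" using w1 anti[of w1 u] by (simp add: W_def)
  have eu: "br e u = - (lam *s e)" using eW anti[of e u] by (simp add: W_def)
  have inW: "\<And>x. x \<in> W \<Longrightarrow> br u x = lam *s x" by (simp add: W_def)
  have Wspan: "w \<in> span {w1, e}" if w: "w \<in> W" for w
  proof -
    obtain c1 where c1: "br e w = c1 *s u" using WW[OF eW w] by blast
    obtain c2 where c2: "br w w1 = c2 *s u" using WW[OF w w1] by blast
    have wu: "br w u = - (lam *s w)" using w anti[of w u] by (simp add: W_def)
    have "br w1 (br e w) + br e (br w w1) + br w (br w1 e) = 0" by (rule jac)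
    then have "c1 *s (- (lam *s w1)) + c2 *s (- (lam *s e)) + (- (lam *s w)) = 0"
      by (simp only: c1 c2 w1e rsc w1u eu wu)
    moreover have "lam *s (c1 *s w1 + c2 *s e + w) =
        - (c1 *s (- (lam *s w1)) + c2 *s (- (lam *s e)) + (- (lam *s w)))"
      by (simp add: algebra_simps)
    ultimately have "lam *s (c1 *s w1 + c2 *s e + w) = 0" by simp
    then have "c1 *s w1 + c2 *s e + w = 0" using lam0 by simp
    then have "w + (c1 *s w1 + c2 *s e) = 0" by (simp only: add.commute)
    then have "w = - (c1 *s w1 + c2 *s e)" by (simp only: eq_neg_iff_add_eq_0)
    then have "w = (- c1) *s w1 + (- c2) *s e" by simp
    then show ?thesis using span2 by blast
  qed
  have w1n0: "w1 \<noteq> 0" using nz by auto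
  have e_nsp: "e \<notin> span {w1}"
  proof
    assume "e \<in> span {w1}"
    then have "e \<in> range (\<lambda>k. k *s w1)" by (simp add: span_singleton)
    then obtain k where "e = k *s w1" by blast
    then have "br w1 e = 0" by (simp add: rsc alt)
    then show False using w1e u0 by simp
  qed
  have Wnsp: "w \<notin> span {u}" if "w \<in> W" "w \<noteq> 0" for w
  proof
    assume "w \<in> span {u}"
    then have "w \<in> range (\<lambda>k. k *s u)" by (simp add: span_singleton)
    then obtain k where k: "w = k *s u" by blast
    then have "k = 0" using uW that by blast
    then show False using k that by simp
  qed
  have Ueq: "U = span {u}"
  proof
    show "span {u} \<subseteq> U" using uU Usp by (simp add: span_minimal)
  next
    show "U \<subseteq> span {u}"
    proof
      fix y assume yU: "y \<in> U"
      obtain c w where cw: "w \<in> W" "y = c *s u + w" using decomp by blast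
      have wU: "w \<in> U" using yU uU Usp cw
        by (metis add_diff_cancel_left' subspace_diff subspace_scale)
      have "w = 0"
      proof (rule ccontr)
        assume wn: "w \<noteq> 0"
        obtain p q where pq: "w = p *s w1 + q *s e" using Wspan[OF cw(1)] by (auto simp: span2)
        have ew1: "br e w1 = - u" using w1e anti[of e w1] by simp
        obtain z k where z: "z \<in> W" "k \<noteq> 0" "br w z = k *s u" "z \<in> U \<Longrightarrow> w1 \<in> U \<and> e \<in> U"
        proof (cases "q = 0")
          case False
          have "br w w1 = (- q) *s u" unfolding pq by (simp add: ladd lsc alt ew1)
          moreover have "w1 \<in> U \<Longrightarrow> w1 \<in> U \<and> e \<in> U"
          proof
            assume "w1 \<in> U"
            have "q *s e = w - p *s w1" using pq by (simp add: algebra_simps)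
            then have "e = inverse q *s (w - p *s w1)" using False by (intro scale_solve) auto
            then show "e \<in> U" using wU \<open>w1 \<in> U\<close> Usp by (simp add: subspace_diff subspace_scale)
          qed
          ultimately show ?thesis using that[of w1 "- q"] w1 False by auto
        next
          case True
          then have wp: "w = p *s w1" using pq by simp
          then have p0: "p \<noteq> 0" using wn by auto
          have "br w e = p *s u" unfolding wp by (simp add: lsc w1e)
          moreover have "e \<in> U \<Longrightarrow> w1 \<in> U \<and> e \<in> U"
          proof
            assume "e \<in> U"
            have "w1 = inverse p *s w" using wp p0 by simp
            then show "w1 \<in> U" using wU Usp by (simp add: subspace_scale)
          qed
          ultimately show ?thesis using that[of e p] eW p0 by auto
        qed
        have zU: "z \<notin> U"
        proof
          assume "z \<in> U"
          then have w1U: "w1 \<in> U" and eU: "e \<in> U" using z(4) by auto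
          have "UNIV \<subseteq> U"
          proof
            fix x :: 'v
            obtain c' w' where cw': "w' \<in> W" "x = c' *s u + w'" using decomp by blast
            obtain p' q' where "w' = p' *s w1 + q' *s e" using Wspan[OF cw'(1)] by (auto simp: span2)
            then show "x \<in> U" using cw' w1U eU uU Usp
              by (simp add: subspace_add subspace_scale)
          qed
          moreover have "lie_ideal scale br UNIV" unfolding lie_ideal_def by simp
          ultimately have "UNIV \<subseteq> {0::'v}" using ideal_zero by blast
          then show False using u0 by blast
        qed
        let ?S = "gen_subalg scale br {w, z}"
        have Ssub: "lie_subalgebra scale br ?S" by (rule gen_sub)
        have wS: "w \<in> ?S" and zS: "z \<in> ?S" using gen_ge[of "{w,z}"] by auto
        have "k *s u \<in> ?S" using sub_br[OF Ssub wS zS] z(3) by simp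
        then have "inverse k *s (k *s u) \<in> ?S" using sub_sp[OF Ssub] subspace_scale by blast
        then have uS: "u \<in> ?S" using z(2) by simp
        have wnu: "w \<notin> span {u}" using Wnsp cw(1) wn by blast
        have "br u w = 0 *s u + lam *s w" using inW[OF cw(1)] by simp
        then have buw: "br u w \<in> span {u, w}" using span2 by blast
        from hyp wU wn zU have "dim ?S = 2 \<or> mu_algebra scale br ?S" by auto
        then show False
        proof
          assume "dim ?S = 2"
          then have "?S \<subseteq> span {u, w}" using dim2_span uS wS u0 wnu by blast
          then have "z \<in> span {u, w}" using zS by blast
          then obtain a b where ab: "z = a *s u + b *s w" unfolding span2 by blast
          then have "a *s u = z - b *s w" by (simp add: algebra_simps)
          moreover have "z - b *s w \<in> W" using z(1) cw(1) Wsp by (simp add: subspace_diff subspace_scale)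
          ultimately have "a = 0" using uW by simp
          then have "br w z = 0" using ab by (simp add: rsc alt)
          then show False using z(2,3) u0 by simp
        next
          assume "mu_algebra scale br ?S"
          then show False using mu_contra[OF _ Ssub uS u0 wS wnu buw] by blast
        qed
      qed
      then show "y \<in> span {u}" using cw by (simp add: span_scale span_base)
    qed
  qed
  define A where "A = w1"
  define B where "B = inverse lam *s e"
  define C where "C = inverse lam *s u"
  have il: "inverse lam \<noteq> 0" using lam0 by simp
  have AB: "br A B = C" unfolding A_def B_def C_def by (simp add: rsc w1e)
  have BC: "br B C = B" unfolding B_def C_def using lam0
    by (simp add: lsc rsc eu negx)
  have AC: "br A C = A" unfolding A_def C_def using lam0 by (simp add: rsc w1u negx)
  have AW: "A \<in> W" and BW: "B \<in> W" using w1 eW scW by (auto simp: A_def B_def)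
  have CnW: "C \<notin> W" unfolding C_def using uW il by blast
  have C0: "C \<noteq> 0" unfolding C_def using u0 il by simp
  have spC: "span {C} = span {u}"
  proof
    show "span {C} \<subseteq> span {u}" unfolding C_def by (intro span_minimal) (auto intro: span_scale span_base)
    have "u = lam *s C" unfolding C_def using lam0 by simp
    then show "span {u} \<subseteq> span {C}" by (intro span_minimal) (auto intro: span_scale span_base)
  qed
  have ne: "A \<noteq> B" "A \<noteq> C" "B \<noteq> C"
  proof -
    show "A \<noteq> B" using AB C0 alt by auto
    show "A \<noteq> C" using AW CnW by auto
    show "B \<noteq> C" using BW CnW by auto
  qed
  have WC: "k *s C \<in> W \<Longrightarrow> k = 0" for k
    using uW[of "k * inverse lam"] il unfolding C_def by simp
  have B_nsp: "B \<notin> span {C}"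
  proof
    assume "B \<in> span {C}"
    then have "B \<in> range (\<lambda>k. k *s C)" by (simp add: span_singleton)
    then obtain k where k: "B = k *s C" by blast
    then have "k = 0" using WC BW by blast
    then have "B = 0" using k by simp
    then have "e = 0" unfolding B_def using il by simp
    then show False using e_nsp span_zero by auto
  qed
  have A_nsp: "A \<notin> span {B, C}"
  proof
    assume "A \<in> span {B, C}"
    then obtain p q where pq: "A = p *s B + q *s C" by (auto simp: span2)
    then have "q *s C = A - p *s B" by (simp add: algebra_simps)
    moreover have "A - p *s B \<in> W" using AW BW Wsp by (simp add: subspace_diff subspace_scale)
    ultimately have "q = 0" using WC by simp
    then have "w1 = (p * inverse lam) *s e" using pq unfolding A_def B_def by simp
    then have "br w1 e = 0" by (metis lsc alt scale_zero_right)
    then show False using w1e u0 by simp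
  qed
  have indep: "\<not> dependent {A, B, C}"
  proof -
    have "independent {C}" using C0 by (simp add: independent_insert independent_empty)
    then have "independent {B, C}" by (rule independent_insertI[OF B_nsp])
    then show ?thesis by (rule independent_insertI[OF A_nsp])
  qed
  have spall: "span {A, B, C} = UNIV"
  proof -
    have "x \<in> span {A, B, C}" for x
    proof -
      obtain c w where cw: "w \<in> W" "x = c *s u + w" using decomp by blast
      obtain p q where pq: "w = p *s w1 + q *s e" using Wspan[OF cw(1)] by (auto simp: span2)
      have "x = (c * lam) *s C + p *s A + (q * lam) *s B"
        unfolding cw(2) pq A_def B_def C_def using lam0 by (simp add: add.assoc mult.assoc)
      moreover have "A \<in> span {A,B,C}" "B \<in> span {A,B,C}" "C \<in> span {A,B,C}" by (auto intro: span_base)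
      ultimately show ?thesis by (simp add: span_add span_scale)
    qed
    then show ?thesis by blast
  qed
  have "iso_K_with scale br U"
    unfolding iso_K_with_def
    using ne indep spall AB BC AC Ueq spC by blast
  then show ?thesis using two by blast
qed

end

theorem lemma3p3:
  fixes scale :: "'f::field \<Rightarrow> 'v::ab_group_add \<Rightarrow> 'v"
    and br :: "'v \<Rightarrow> 'v \<Rightarrow> 'v"
    and U :: "'v set"
  assumes "lie_algebra scale br"
    and "fin_dim scale"
    and "lie_subalgebra scale br U"
    and "core_free scale br U"
    and "\<forall>u\<in>U. \<forall>z. u \<noteq> 0 \<and> z \<notin> U \<longrightarrow>
           vector_space.dim scale (gen_subalg scale br {u, z}) = 2 \<or>
           mu_algebra scale br (gen_subalg scale br {u, z})"
  shows "almost_abelian scale br \<or>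
         (\<forall>u\<in>U. \<forall>z. u \<noteq> 0 \<and> z \<notin> U \<longrightarrow> mu_algebra scale br (gen_subalg scale br {u, z})) \<or>
         (CHAR('f) = 2 \<and> iso_K_with scale br U)"
proof -
  have LC: "lieUc scale br U"
    using assms(1,3,4,5)
    unfolding lieUc_def lieUc_axioms_def lieU_def lieU_axioms_def lie_def lie_axioms_def lie_algebra_def
    by blast
  interpret L: lieUc scale br U by (rule LC)
  show ?thesis
  proof (cases "\<forall>u\<in>U. \<forall>z. u \<noteq> 0 \<and> z \<notin> U \<longrightarrow> mu_algebra scale br (gen_subalg scale br {u, z})")
    case True then show ?thesis by blast
  next
    case False
    then obtain u z where u: "u \<in> U" "u \<noteq> 0" and z: "z \<notin> U"
      and nmu: "\<not> mu_algebra scale br (gen_subalg scale br {u, z})" by blast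
    have "L.dim (gen_subalg scale br {u, z}) = 2" using assms(5) u z nmu by blast
    then have "br u z \<in> L.span {u, z}" using L.dim2_br u z by blast
    then obtain al lam where bz: "br u z = scale al u + scale lam z" unfolding L.span2 by blast
    have bz': "br u z = scale lam z + scale al u" using bz by (simp add: add.commute)
    have P: "\<And>z'. z' \<notin> U \<Longrightarrow> br u z' \<in> L.span {u, z'}"
      using L.stepB[OF u z bz'] by blast
    have ad: "\<And>x. \<exists>c. br u x = scale lam x + scale c u"
      using L.stepC[OF u z bz' P] by blast
    have lam0: "lam \<noteq> 0" using L.lam_ne0[OF u ad] .
    have FF: "fin scale br U u lam"
      unfolding fin_def fin_axioms_def using LC u lam0 ad by blast
    interpret F: fin scale br U u lam by (rule FF)
    show ?thesis
    proof (cases "\<forall>w1\<in>F.W. \<forall>w2\<in>F.W. br w1 w2 = 0")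
      case True
      then show ?thesis using F.abelian_case by blast
    next
      case False
      then obtain w1 w2 where "w1 \<in> F.W" "w2 \<in> F.W" "br w1 w2 \<noteq> 0" by blast
      then have two: "(2::'f) = 0" and iso: "iso_K_with scale br U" using F.nonab_case by blast+
      have "of_nat 2 = (0::'f)" using two by simp
      then have dv: "CHAR('f) dvd 2" by (simp only: of_nat_eq_0_iff_char_dvd)
      then have "CHAR('f) \<le> 2" using dvd_imp_le by auto
      moreover have "CHAR('f) \<noteq> 0" using dv by (intro notI) simp
      moreover have "CHAR('f) \<noteq> Suc 0" by simp
      ultimately have "CHAR('f) = 2" by linarith
      then show ?thesis using iso by blast
    qed
  qed
qed

end
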